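(* Let $(\Omega,\Sigma,\Pr)$ be a probability space and let $A_i\in\Sigma$ for $i\in\mathbb{N}$. For $k\in\mathbb{N}$ let $S_k:=\sum_{1\le i_1<\cdots<i_k}\Pr(A_{i_1}\cap\cdots\cap A_{i_k})$, and assume $S_l\in[0,\infty)$ for all $l\in\mathbb{N}$. Suppose that for some integer $m>1$ the identity $$\Pr\Big(\bigcup_{1\le i_1<\cdots<i_k}(A_{i_1}\cap\cdots\cap A_{i_k})\Big)=\sum_{j\in\mathbb{Z}_+}(-1)^j\binom{j+k-1}{k-1}S_{j+k}$$ holds for $k=m$ (with the series convergent). Then this identity holds for each $k=1,\ldots,m-1$.
   Context: $\mathbb{N}$ denotes the positive integers and $\mathbb{Z}_+$ the nonnegative integers. *)

theory Defs
  imports "HOL-Probability.Probability"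
begin

definition ksubsets :: "nat \<Rightarrow> nat set set" where
  "ksubsets k = {I. I \<subseteq> {1..} \<and> finite I \<and> card I = k}"

definition Ssum :: "'a measure \<Rightarrow> (nat \<Rightarrow> 'a set) \<Rightarrow> nat \<Rightarrow> real" where
  "Ssum M A k = infsum (\<lambda>I. measure M (\<Inter>i\<in>I. A i)) (ksubsets k)"

definition atleast_event :: "(nat \<Rightarrow> 'a set) \<Rightarrow> nat \<Rightarrow> 'a set" where
  "atleast_event A k = (\<Union>I\<in>ksubsets k. \<Inter>i\<in>I. A i)"

end

theory Submission
  imports Defs
begin


definition rr :: "nat \<Rightarrow> nat \<Rightarrow> nat \<Rightarrow> nat" where
  "rr k J n = (\<Sum>t\<in>{k..<n}. (t choose (k-1)) * ((t-k) choose J))"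

lemma alt_partial:
  "(\<Sum>j\<le>J. (-1)^j * real (Suc a choose j)) = (-1)^J * real (a choose J)"
proof (induction J)
  case 0 then show ?case by simp
next
  case (Suc J)
  have "(\<Sum>j\<le>Suc J. (-1)^j * real (Suc a choose j))
      = (-1)^J * real (a choose J) + (-1)^(Suc J) * real (Suc a choose Suc J)"
    using Suc by simp
  also have "\<dots> = (-1)^(Suc J) * real (a choose Suc J)"
    by (simp add: algebra_simps)
  finally show ?case .
qed

lemma diff_step:
  assumes "1 \<le> k"
  shows "(\<Sum>j\<le>J. (-1)^j * real ((j+k-1) choose (k-1)) * real (n choose (j+k-1)))
     = (if n = k-1 then 1 else 0) + (if k \<le> n then (-1)^J * real (n choose (k-1)) * real ((n-k) choose J) else 0)"
proof (cases "n < k - 1")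
  case True
  then show ?thesis by (auto intro!: sum.neutral)
next
  case False
  have eq: "real ((j+k-1) choose (k-1)) * real (n choose (j+k-1)) = real (n choose (k-1)) * real ((n-(k-1)) choose j)" for j
  proof (cases "j+k-1 \<le> n")
    case True
    then show ?thesis using choose_mult[of "k-1" "j+k-1" n] assms
      by (simp add: mult.commute flip: of_nat_mult)
  next
    case f: False
    have "n - (k-1) < j" using f assms \<open>\<not> n < k - 1\<close> by linarith
    moreover have "n < j+k-1" using f by linarith
    ultimately show ?thesis by (simp add: binomial_eq_0)
  qed
  have "(\<Sum>j\<le>J. (-1)^j * real ((j+k-1) choose (k-1)) * real (n choose (j+k-1)))
     = real (n choose (k-1)) * (\<Sum>j\<le>J. (-1)^j * real ((n-(k-1)) choose j))"
    unfolding sum_distrib_left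
    apply (intro sum.cong refl)
    subgoal for j using eq[of j] by (simp add: algebra_simps)
    done
  also have "\<dots> = (if n = k-1 then 1 else 0) + (if k \<le> n then (-1)^J * real (n choose (k-1)) * real ((n-k) choose J) else 0)"
  proof (cases "n = k-1")
    case True
    then have "(\<Sum>j\<le>J. (-1)^j * real ((n-(k-1)) choose j)) = (\<Sum>j\<le>J. if j = 0 then 1 else 0)"
      by (intro sum.cong) auto
    then show ?thesis using True assms by auto
  next
    case nk: False
    with False have "n - (k-1) = Suc (n-k)" "k \<le> n" using assms by linarith+
    then show ?thesis using alt_partial[where J=J and a="n-k"] nk by simp
  qed
  finally show ?thesis .
qed

lemma comb1:
  assumes "1 \<le> k"
  shows "(\<Sum>j\<le>J. (-1)^j * real ((j+k-1) choose (k-1)) * real (n choose (j+k)))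
     - (if k \<le> n then 1 else 0) = (-1)^J * real (rr k J n)"
proof (induction n)
  case 0
  have "(\<Sum>j\<le>J. (-1)^j * real ((j+k-1) choose (k-1)) * real (0 choose (j+k))) = 0"
    using assms by (intro sum.neutral) auto
  then show ?case using assms by (simp add: rr_def)
next
  case (Suc n)
  have pas: "real (Suc n choose (j+k)) = real (n choose (j+k)) + real (n choose (j+k-1))" for j
  proof -
    have "j + k = Suc (j+k-1)" using assms by simp
    then show ?thesis by (metis binomial_Suc_Suc of_nat_add add.commute)
  qed
  have "(\<Sum>j\<le>J. (-1)^j * real ((j+k-1) choose (k-1)) * real (Suc n choose (j+k)))
     = (\<Sum>j\<le>J. (-1)^j * real ((j+k-1) choose (k-1)) * real (n choose (j+k)))
     + (\<Sum>j\<le>J. (-1)^j * real ((j+k-1) choose (k-1)) * real (n choose (j+k-1)))"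
    by (simp add: pas algebra_simps sum.distrib)
  moreover have "rr k J (Suc n) = rr k J n + (if k \<le> n then (n choose (k-1)) * ((n-k) choose J) else 0)"
    by (simp add: rr_def)
  ultimately show ?case using Suc diff_step[OF assms, where J=J and n=n] assms
    by (auto simp: algebra_simps)
qed

lemma comb2_term:
  assumes "1 \<le> k" "k \<le> J" "k < t"
  shows "(t choose (k-1)) * ((t-k) choose J) \<le> (t choose k) * ((t - Suc k) choose (J-1))"
proof -
  define s where "s = t - k"
  have s1: "s \<ge> 1" using assms s_def by simp
  have e1: "(t - (k-1)) * (t choose (k-1)) = t * ((t-1) choose (k-1))"
    by (rule binomial_absorb_comp)
  have e2: "k * (t choose k) = t * ((t-1) choose (k-1))"
    using times_binomial_minus1_eq assms by simp
  have ts: "t - (k-1) = s + 1" using assms s_def by simp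
  have A: "(s+1) * (t choose (k-1)) = k * (t choose k)" using e1 e2 ts by simp
  have B: "J * (s choose J) = s * ((s-1) choose (J-1))"
    using times_binomial_minus1_eq[of J s] assms by simp
  have ts2: "t - Suc k = s - 1" using s_def by simp
  have "((t choose (k-1)) * (s choose J)) * ((s+1) * J) = ((s+1) * (t choose (k-1))) * (J * (s choose J))"
    by (simp only: ac_simps)
  also have "\<dots> = (k * (t choose k)) * (s * ((s-1) choose (J-1)))"
    by (simp only: A B)
  also have "\<dots> = (k * s) * ((t choose k) * ((s-1) choose (J-1)))"
    by (simp only: ac_simps)
  also have "\<dots> \<le> ((s+1) * J) * ((t choose k) * ((s-1) choose (J-1)))"
  proof (rule mult_right_mono)
    have "k * s \<le> J * s" using assms by (intro mult_right_mono) auto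
    also have "\<dots> \<le> J * (s+1)" by simp
    finally show "k * s \<le> (s+1) * J" by (simp only: ac_simps)
  qed simp
  finally have le: "((t choose (k-1)) * (s choose J)) * ((s+1) * J) \<le> ((t choose k) * ((s-1) choose (J-1))) * ((s+1) * J)"
    by (simp only: ac_simps)
  have pos: "0 < (s+1) * J" using assms by simp
  have "(t choose (k-1)) * (s choose J) \<le> (t choose k) * ((s-1) choose (J-1))"
    using mult_le_cancel2[THEN iffD1, OF le] pos by (rule mp)
  then show ?thesis unfolding ts2 s_def[symmetric] .
qed

lemma comb2:
  assumes "1 \<le> k" "k \<le> J"
  shows "rr k J n \<le> rr (Suc k) (J-1) n"
proof (cases "k < n")
  case False then show ?thesis by (simp add: rr_def)
next
  case True
  have "rr k J n = (\<Sum>t\<in>{Suc k..<n}. (t choose (k-1)) * ((t-k) choose J))"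
    unfolding rr_def using True assms by (subst sum.atLeast_Suc_lessThan) auto
  also have "\<dots> \<le> (\<Sum>t\<in>{Suc k..<n}. (t choose k) * ((t - Suc k) choose (J-1)))"
    using comb2_term assms by (intro sum_mono) auto
  finally show ?thesis by (simp add: rr_def)
qed

lemma comb3:
  assumes "1 \<le> k" "k + 2*d \<le> J"
  shows "rr k J n \<le> rr (k+d) (J-d) n"
  using assms
proof (induction d arbitrary: k J)
  case 0 then show ?case by simp
next
  case (Suc d)
  have "rr k J n \<le> rr (Suc k) (J-1) n" using Suc.prems by (intro comb2) auto
  also have "\<dots> \<le> rr (Suc k + d) (J - 1 - d) n" using Suc.prems by (intro Suc.IH) auto
  finally show ?case by (simp add: add.commute)
qed



lemma meas_count_nn:
  fixes f :: "'i \<Rightarrow> 'a \<Rightarrow> ennreal"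
  assumes "countable I" and meas: "\<And>i. i \<in> I \<Longrightarrow> f i \<in> borel_measurable M"
  shows "(\<lambda>x. \<integral>\<^sup>+i. f i x \<partial>count_space I) \<in> borel_measurable M"
proof cases
  assume "finite I" then show ?thesis
    using meas by (simp add: nn_integral_count_space_finite)
next
  assume "infinite I"
  then have [simp]: "I \<noteq> {}"
    by auto
  note * = bij_betw_from_nat_into[OF \<open>countable I\<close> \<open>infinite I\<close>]
  have **: "\<And>g. (\<integral>\<^sup>+i. g i \<partial>count_space I) = (\<Sum>n. g (from_nat_into I n))"
    by (simp add: nn_integral_bij_count_space[symmetric, OF *] nn_integral_count_space_nat)
  have "(\<lambda>x. \<Sum>n. f (from_nat_into I n) x) \<in> borel_measurable M"
    using meas from_nat_into[OF \<open>I \<noteq> {}\<close>] by measurable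
  then show ?thesis by (simp add: **)
qed

locale cor_ctx = prob_space M for M :: "'a measure" +
  fixes A :: "nat \<Rightarrow> 'a set"
  assumes A_sets: "\<And>i. i \<ge> 1 \<Longrightarrow> A i \<in> sets M"
  and summ: "\<And>l. l \<ge> 1 \<Longrightarrow> (\<lambda>I. measure M (\<Inter>i\<in>I. A i)) summable_on ksubsets l"
begin

definition X where "X \<omega> = {i. 1 \<le> i \<and> \<omega> \<in> A i}"
definition Gen where "Gen l \<omega> = (\<integral>\<^sup>+I. indicator (\<Inter>i\<in>I. A i) \<omega> \<partial>count_space (ksubsets l))"
definition G where "G l \<omega> = enn2real (Gen l \<omega>)"

lemma countable_ks: "countable (ksubsets l)"
  by (rule countable_subset[OF _ countable_Collect_finite]) (auto simp: ksubsets_def)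

lemma inter_sets: "l \<ge> 1 \<Longrightarrow> I \<in> ksubsets l \<Longrightarrow> (\<Inter>i\<in>I. A i) \<in> sets M"
  unfolding ksubsets_def by (intro sets.finite_INT A_sets) auto

lemma Gen_meas: "l \<ge> 1 \<Longrightarrow> Gen l \<in> borel_measurable M"
  unfolding Gen_def[abs_def]
  by (intro meas_count_nn countable_ks borel_measurable_indicator inter_sets)

lemma G_meas: "l \<ge> 1 \<Longrightarrow> G l \<in> borel_measurable M"
  unfolding G_def[abs_def] using Gen_meas by measurable

lemma mem_inter_iff: "I \<in> ksubsets l \<Longrightarrow> \<omega> \<in> (\<Inter>i\<in>I. A i) \<longleftrightarrow> I \<subseteq> X \<omega>"
  by (auto simp: ksubsets_def X_def)

lemma Gen_eq: "Gen l \<omega> = emeasure (count_space (ksubsets l)) {I \<in> ksubsets l. I \<subseteq> X \<omega>}"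
proof -
  have "Gen l \<omega> = (\<integral>\<^sup>+I. indicator {I \<in> ksubsets l. I \<subseteq> X \<omega>} I \<partial>count_space (ksubsets l))"
    unfolding Gen_def
    by (intro nn_integral_cong) (auto simp: indicator_def mem_inter_iff simp del: Inter_iff INT_iff)
  also have "\<dots> = emeasure (count_space (ksubsets l)) {I \<in> ksubsets l. I \<subseteq> X \<omega>}"
    by (intro nn_integral_indicator) auto
  finally show ?thesis .
qed

lemma Gen_pt: "finite (X \<omega>) \<Longrightarrow> Gen l \<omega> = of_nat (card (X \<omega>) choose l)"
proof -
  assume fin: "finite (X \<omega>)"
  have eq: "{I \<in> ksubsets l. I \<subseteq> X \<omega>} = {I. I \<subseteq> X \<omega> \<and> card I = l}"
    using fin by (auto simp: ksubsets_def X_def intro: finite_subset)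
  have "finite {I. I \<subseteq> X \<omega> \<and> card I = l}"
    using fin by (rule finite_subset[rotated, OF finite_Pow_iff[THEN iffD2]]) auto
  then show ?thesis
    unfolding Gen_eq eq using n_subsets[OF fin, of l]
    by (subst emeasure_count_space) (auto simp: eq[symmetric])
qed

lemma Gen_inf: "infinite (X \<omega>) \<Longrightarrow> Gen 1 \<omega> = \<infinity>"
proof -
  assume inf: "infinite (X \<omega>)"
  have sub: "(\<lambda>i. {i}) ` X \<omega> \<subseteq> {I \<in> ksubsets 1. I \<subseteq> X \<omega>}"
    by (auto simp: ksubsets_def X_def)
  have "infinite ((\<lambda>i. {i}) ` X \<omega>)"
    using inf by (auto dest!: finite_imageD simp: inj_on_def)
  then have "infinite {I \<in> ksubsets 1. I \<subseteq> X \<omega>}"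
    using sub finite_subset by blast
  then show ?thesis unfolding Gen_eq
    by (subst emeasure_count_space) auto
qed

lemma abs_summ: "l \<ge> 1 \<Longrightarrow> Infinite_Set_Sum.abs_summable_on (\<lambda>I. measure M (\<Inter>i\<in>I. A i)) (ksubsets l)"
proof -
  assume l: "l \<ge> 1"
  have "(\<lambda>I. norm (measure M (\<Inter>i\<in>I. A i))) summable_on ksubsets l"
    using summ[OF l] by simp
  then show ?thesis using abs_summable_equivalent by blast
qed

lemma nnGen: "l \<ge> 1 \<Longrightarrow> (\<integral>\<^sup>+\<omega>. Gen l \<omega> \<partial>M) = ennreal (Ssum M A l)"
proof -
  assume l: "l \<ge> 1"
  have "(\<integral>\<^sup>+\<omega>. Gen l \<omega> \<partial>M) = (\<integral>\<^sup>+I. \<integral>\<^sup>+\<omega>. indicator (\<Inter>i\<in>I. A i) \<omega> \<partial>M \<partial>count_space (ksubsets l))"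
    unfolding Gen_def
    by (rule nn_integral_count_space_nn_integral[OF countable_ks]) (auto intro!: borel_measurable_indicator inter_sets[OF l])
  also have "\<dots> = (\<integral>\<^sup>+I. ennreal (measure M (\<Inter>i\<in>I. A i)) \<partial>count_space (ksubsets l))"
    by (intro nn_integral_cong) (simp add: inter_sets[OF l] emeasure_eq_measure)
  also have "\<dots> = ennreal (infsetsum (\<lambda>I. measure M (\<Inter>i\<in>I. A i)) (ksubsets l))"
    by (intro nn_integral_conv_infsetsum abs_summ l) auto
  also have "\<dots> = ennreal (Ssum M A l)"
    unfolding Ssum_def using infsetsum_infsum[OF abs_summ[OF l]] by simp
  finally show ?thesis .
qed

lemma AE_fin: "AE \<omega> in M. finite (X \<omega>)"
proof -
  have "AE \<omega> in M. Gen 1 \<omega> \<noteq> \<infinity>"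
    by (intro nn_integral_PInf_AE Gen_meas) (auto simp: nnGen)
  moreover have "Gen 1 \<omega> \<noteq> \<infinity> \<Longrightarrow> finite (X \<omega>)" for \<omega>
    using Gen_inf[of \<omega>] by blast
  ultimately show ?thesis by (auto elim!: eventually_mono)
qed

lemma Ssum_nonneg: "Ssum M A l \<ge> 0"
  unfolding Ssum_def by (intro infsum_nonneg) auto

lemma G_nonneg: "G l \<omega> \<ge> 0"
  by (simp add: G_def)

lemma G_int: "l \<ge> 1 \<Longrightarrow> integrable M (G l)"
  and G_integral: "l \<ge> 1 \<Longrightarrow> integral\<^sup>L M (G l) = Ssum M A l"
proof -
  assume l: "l \<ge> 1"
  have ae: "AE \<omega> in M. Gen l \<omega> \<noteq> \<infinity>"
    by (intro nn_integral_PInf_AE Gen_meas l) (auto simp: nnGen[OF l])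
  have "(\<integral>\<^sup>+\<omega>. ennreal (G l \<omega>) \<partial>M) = (\<integral>\<^sup>+\<omega>. Gen l \<omega> \<partial>M)"
    using ae by (intro nn_integral_cong_AE) (auto simp: G_def less_top)
  also have "\<dots> = ennreal (Ssum M A l)" by (rule nnGen[OF l])
  finally have eq: "(\<integral>\<^sup>+\<omega>. ennreal (G l \<omega>) \<partial>M) = ennreal (Ssum M A l)" .
  show "integrable M (G l)"
    by (intro integrableI_nonneg G_meas l) (auto simp: eq G_nonneg)
  show "integral\<^sup>L M (G l) = Ssum M A l"
    by (subst integral_eq_nn_integral) (auto simp: eq G_nonneg G_meas[OF l] Ssum_nonneg)
qed

lemma G_pt: "finite (X \<omega>) \<Longrightarrow> G l \<omega> = real (card (X \<omega>) choose l)"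
  by (simp add: G_def Gen_pt)

lemma atl_sets: "k \<ge> 1 \<Longrightarrow> atleast_event A k \<in> sets M"
  unfolding atleast_event_def
  by (intro sets.countable_UN'' countable_ks inter_sets)

lemma atl_pt: "finite (X \<omega>) \<Longrightarrow> \<omega> \<in> atleast_event A k \<longleftrightarrow> k \<le> card (X \<omega>)"
proof -
  assume fin: "finite (X \<omega>)"
  have "\<omega> \<in> atleast_event A k \<longleftrightarrow> (\<exists>I\<in>ksubsets k. I \<subseteq> X \<omega>)"
    unfolding atleast_event_def using mem_inter_iff by blast
  also have "\<dots> \<longleftrightarrow> k \<le> card (X \<omega>)"
  proof
    assume "\<exists>I\<in>ksubsets k. I \<subseteq> X \<omega>"
    then obtain I where "I \<in> ksubsets k" "I \<subseteq> X \<omega>" by blast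
    then show "k \<le> card (X \<omega>)" using card_mono[OF fin] by (auto simp: ksubsets_def)
  next
    assume "k \<le> card (X \<omega>)"
    then obtain T where "T \<subseteq> X \<omega>" "card T = k" "finite T" by (rule obtain_subset_with_card_n)
    then show "\<exists>I\<in>ksubsets k. I \<subseteq> X \<omega>"
      by (intro bexI[of _ T]) (auto simp: ksubsets_def X_def)
  qed
  finally show ?thesis .
qed

definition Pf where
  "Pf k J \<omega> = (\<Sum>j<J. (-1)^j * real ((j+k-1) choose (k-1)) * G (j+k) \<omega>) - indicator (atleast_event A k) \<omega>"

lemma Pf_int: "k \<ge> 1 \<Longrightarrow> integrable M (Pf k J)"
  unfolding Pf_def[abs_def]
  by (intro Bochner_Integration.integrable_diff Bochner_Integration.integrable_sum integrable_mult_right G_int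
        integrable_real_indicator atl_sets) (auto simp: less_top[symmetric] emeasure_finite)

lemma Pf_integral: "k \<ge> 1 \<Longrightarrow> integral\<^sup>L M (Pf k J)
   = (\<Sum>j<J. (-1)^j * real ((j+k-1) choose (k-1)) * Ssum M A (j+k)) - measure M (atleast_event A k)"
proof -
  assume k: "k \<ge> 1"
  have i1: "integrable M (\<lambda>\<omega>. (\<Sum>j<J. (-1)^j * real ((j+k-1) choose (k-1)) * G (j+k) \<omega>))"
    using k by (intro Bochner_Integration.integrable_sum integrable_mult_right G_int) auto
  have i2: "integrable M (indicator (atleast_event A k) :: 'a \<Rightarrow> real)"
    using k by (intro integrable_real_indicator atl_sets) (auto simp: less_top[symmetric] emeasure_finite)
  show ?thesis
    unfolding Pf_def[abs_def]
    using k atl_sets[OF k]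
    by (subst Bochner_Integration.integral_diff[OF i1 i2], subst Bochner_Integration.integral_sum)
       (auto intro!: G_int simp: G_integral Int_absorb2 sets.sets_into_space)
qed

lemma Pf_pt: "k \<ge> 1 \<Longrightarrow> finite (X \<omega>) \<Longrightarrow> Pf k (Suc J) \<omega> = (-1)^J * real (rr k J (card (X \<omega>)))"
proof -
  assume k: "k \<ge> 1" and fin: "finite (X \<omega>)"
  have "Pf k (Suc J) \<omega> = (\<Sum>j\<le>J. (-1)^j * real ((j+k-1) choose (k-1)) * real (card (X \<omega>) choose (j+k)))
     - (if k \<le> card (X \<omega>) then 1 else 0)"
    unfolding Pf_def using fin by (simp add: G_pt atl_pt lessThan_Suc_atMost indicator_def)
  also have "\<dots> = (-1)^J * real (rr k J (card (X \<omega>)))" by (rule comb1[OF k])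
  finally show ?thesis .
qed


lemma neg_pow_le_abs: "(-1::real)^J * x \<le> \<bar>x\<bar>"
  by (cases "even J") auto

lemma main:
  assumes k1: "1 \<le> k" and km: "k < m"
  and hyp: "(\<lambda>j. (-1)^j * real ((j+m-1) choose (m-1)) * Ssum M A (j+m)) sums measure M (atleast_event A m)"
  shows "(\<lambda>j. (-1)^j * real ((j+k-1) choose (k-1)) * Ssum M A (j+k)) sums measure M (atleast_event A k)"
proof -
  have m1: "1 \<le> m" using assms by simp
  define d where "d = m - k"
  have md: "m = k + d" using assms d_def by simp
  have "(\<lambda>J. (\<Sum>j<J. (-1)^j * real ((j+m-1) choose (m-1)) * Ssum M A (j+m)) - measure M (atleast_event A m))
        \<longlonglongrightarrow> measure M (atleast_event A m) - measure M (atleast_event A m)"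
    using hyp unfolding sums_def by (intro tendsto_diff tendsto_const)
  then have lim_m: "(\<lambda>J. integral\<^sup>L M (Pf m J)) \<longlonglongrightarrow> 0"
    by (simp add: Pf_integral[OF m1])
  then have lim_m': "(\<lambda>J. integral\<^sup>L M (Pf m (Suc J))) \<longlonglongrightarrow> 0"
    by (rule LIMSEQ_Suc)
  then have lim_abs: "(\<lambda>J. \<bar>integral\<^sup>L M (Pf m (Suc J))\<bar>) \<longlonglongrightarrow> 0"
    by (rule tendsto_rabs_zero)
  have bound: "norm (integral\<^sup>L M (Pf k (J + Suc d))) \<le> \<bar>integral\<^sup>L M (Pf m (Suc J))\<bar>"
    if J: "m \<le> J" for J
  proof -
    have "norm (integral\<^sup>L M (Pf k (J + Suc d))) \<le> (\<integral>x. norm (Pf k (J + Suc d) x) \<partial>M)"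
      by (rule integral_norm_bound)
    also have "\<dots> \<le> (\<integral>x. (-1)^J * Pf m (Suc J) x \<partial>M)"
    proof (rule integral_mono_AE)
      show "integrable M (\<lambda>x. norm (Pf k (J + Suc d) x))"
        by (intro integrable_norm Pf_int k1)
      show "integrable M (\<lambda>x. (-1)^J * Pf m (Suc J) x)"
        by (intro integrable_mult_right Pf_int m1)
      show "AE x in M. norm (Pf k (J + Suc d) x) \<le> (-1)^J * Pf m (Suc J) x"
        using AE_fin
      proof (rule eventually_mono)
        fix x assume fin: "finite (X x)"
        have "rr k (J + d) (card (X x)) \<le> rr (k + d) (J + d - d) (card (X x))"
          using J md by (intro comb3 k1) auto
        then have le: "rr k (J + d) (card (X x)) \<le> rr m J (card (X x))"
          using md by simp
        have "norm (Pf k (J + Suc d) x) = real (rr k (J + d) (card (X x)))"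
          using Pf_pt[OF k1 fin, of "J + d"] by (simp add: abs_mult)
        also have "\<dots> \<le> real (rr m J (card (X x)))" using le by simp
        also have "\<dots> = (-1)^J * Pf m (Suc J) x"
          using Pf_pt[OF m1 fin, of J] by (simp flip: mult.assoc power_add add: power_add[symmetric] mult_2[symmetric] power_mult[symmetric])
        finally show "norm (Pf k (J + Suc d) x) \<le> (-1)^J * Pf m (Suc J) x" .
      qed
    qed
    also have "\<dots> = (-1)^J * integral\<^sup>L M (Pf m (Suc J))"
      by simp
    also have "\<dots> \<le> \<bar>integral\<^sup>L M (Pf m (Suc J))\<bar>"
      by (rule neg_pow_le_abs)
    finally show ?thesis .
  qed
  have "(\<lambda>J. integral\<^sup>L M (Pf k (J + Suc d))) \<longlonglongrightarrow> 0"
    by (rule Lim_null_comparison[OF _ lim_abs]) (use bound in \<open>auto simp: eventually_sequentially\<close>)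
  then have "(\<lambda>J. integral\<^sup>L M (Pf k J)) \<longlonglongrightarrow> 0"
    by (rule LIMSEQ_offset)
  then have "(\<lambda>J. integral\<^sup>L M (Pf k J) + measure M (atleast_event A k)) \<longlonglongrightarrow> 0 + measure M (atleast_event A k)"
    by (intro tendsto_add tendsto_const)
  then show ?thesis
    unfolding sums_def by (simp add: Pf_integral[OF k1])
qed

end


theorem corollary2p2:
  fixes M :: "'a measure" and A :: "nat \<Rightarrow> 'a set" and m :: nat
  assumes "prob_space M"
    and "\<And>i. i \<ge> 1 \<Longrightarrow> A i \<in> sets M"
    and "\<And>l. l \<ge> 1 \<Longrightarrow> (\<lambda>I. measure M (\<Inter>i\<in>I. A i)) summable_on ksubsets l"
    and "m > 1"
    and "(\<lambda>j. (-1) ^ j * real ((j + m - 1) choose (m - 1)) * Ssum M A (j + m))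
           sums measure M (atleast_event A m)"
    and "1 \<le> k" and "k \<le> m - 1"
  shows "(\<lambda>j. (-1) ^ j * real ((j + k - 1) choose (k - 1)) * Ssum M A (j + k))
           sums measure M (atleast_event A k)"
proof -
  have "cor_ctx M A"
    by (intro cor_ctx.intro cor_ctx_axioms.intro assms(1-3))
  then interpret cor_ctx M A .
  have "k < m" using assms(4,7) by linarith
  then show ?thesis
    by (rule main[OF assms(6) _ assms(5)])
qed

end
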